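(* There are computable functions $f$ and $g$ such that for every mixed graph $G$ without directed cycles, $\chi(G)\le f(\mathrm{tw}(G^+))$ and $\chi(G)\le g(\mathrm{td}(G))$. Moreover, for every such $G$, $\chi(G)\le 2\,\mathrm{vc}(G)+1$.
   Context: A mixed graph $G$ consists of a finite vertex set $V(G)$, a set $E(G)$ of undirected edges and a set $A(G)$ of directed arcs; it is simple and contains no directed cycle. A $k$-coloring $c\colon V(G)\to\{1,\dots,k\}$ is proper if $c(u)\neq c(v)$ for every edge $\{u,v\}$ and $c(u)<c(v)$ for every arc $(u,v)$; $\chi(G)$ is the minimum such $k$. The transitive closure $G^+$ is obtained from $G$ by adding every arc $(u,v)$ such that $G$ has a directed path from $u$ to $v$, and removing any edge parallel to such an arc. $\mathrm{tw}$, $\mathrm{td}$, $\mathrm{vc}$ denote the treewidth, treedepth, and vertex cover number of the underlying undirected graph (every arc replaced by an edge); $\mathrm{tw}(G^+)$ is the treewidth of the underlying undirected graph of $G^+$. *)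

theory Defs
  imports Main
begin

text \<open>The class of total recursive functions: closure of zero, successor and
projections under composition, primitive recursion and regular minimization.
recfn n h means h (viewed on argument lists of length n) is total recursive.\<close>

inductive recfn :: "nat \<Rightarrow> (nat list \<Rightarrow> nat) \<Rightarrow> bool" where
  rf_zero: "recfn n (\<lambda>xs. 0)"
| rf_succ: "recfn 1 (\<lambda>xs. Suc (hd xs))"
| rf_proj: "i < n \<Longrightarrow> recfn n (\<lambda>xs. xs ! i)"
| rf_comp: "recfn m g \<Longrightarrow> length fs = m \<Longrightarrow> (\<forall>f\<in>set fs. recfn n f) \<Longrightarrow>
            recfn n (\<lambda>xs. g (map (\<lambda>f. f xs) fs))"
| rf_prim: "recfn n g \<Longrightarrow> recfn (Suc (Suc n)) h \<Longrightarrow>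
            recfn (Suc n) (\<lambda>xs. rec_nat (g (tl xs)) (\<lambda>k r. h (r # k # tl xs)) (hd xs))"
| rf_mu: "recfn (Suc n) g \<Longrightarrow> (\<forall>xs. length xs = n \<longrightarrow> (\<exists>y. g (y # xs) = 0)) \<Longrightarrow>
          recfn n (\<lambda>xs. LEAST y. g (y # xs) = 0)"

definition computable :: "(nat \<Rightarrow> nat) \<Rightarrow> bool" where
  "computable f \<longleftrightarrow> (\<exists>h. recfn 1 h \<and> (\<forall>x. f x = h [x]))"

definition mixed_graph :: "nat set \<Rightarrow> nat set set \<Rightarrow> (nat \<times> nat) set \<Rightarrow> bool" where
  "mixed_graph V E A \<longleftrightarrow>
     finite V \<and>
     (\<forall>e\<in>E. \<exists>u v. e = {u, v} \<and> u \<noteq> v \<and> u \<in> V \<and> v \<in> V) \<and>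
     A \<subseteq> V \<times> V \<and> (\<forall>v. (v, v) \<notin> A) \<and>
     (\<forall>u v. (u, v) \<in> A \<longrightarrow> {u, v} \<notin> E) \<and>
     acyclic A"

definition proper_coloring :: "nat set \<Rightarrow> nat set set \<Rightarrow> (nat \<times> nat) set \<Rightarrow> nat \<Rightarrow> (nat \<Rightarrow> nat) \<Rightarrow> bool" where
  "proper_coloring V E A k c \<longleftrightarrow>
     (\<forall>v\<in>V. c v \<in> {1..k}) \<and>
     (\<forall>u v. {u, v} \<in> E \<longrightarrow> c u \<noteq> c v) \<and>
     (\<forall>u v. (u, v) \<in> A \<longrightarrow> c u < c v)"

definition chromatic_number :: "nat set \<Rightarrow> nat set set \<Rightarrow> (nat \<times> nat) set \<Rightarrow> nat" where
  "chromatic_number V E A = (LEAST k. \<exists>c. proper_coloring V E A k c)"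

text \<open>Transitive closure G^+: arcs A^+, edges parallel to new arcs removed.\<close>

definition closure_edges :: "nat set set \<Rightarrow> (nat \<times> nat) set \<Rightarrow> nat set set" where
  "closure_edges E A = {e \<in> E. \<not> (\<exists>u v. e = {u, v} \<and> (u, v) \<in> A\<^sup>+)}"

definition closure_arcs :: "(nat \<times> nat) set \<Rightarrow> (nat \<times> nat) set" where
  "closure_arcs A = A\<^sup>+"

definition underlying :: "nat set set \<Rightarrow> (nat \<times> nat) set \<Rightarrow> nat set set" where
  "underlying E A = E \<union> {{u, v} | u v. (u, v) \<in> A}"

definition adj_in :: "nat set set \<Rightarrow> nat set \<Rightarrow> (nat \<times> nat) set" where
  "adj_in E S = {(x, y). x \<in> S \<and> y \<in> S \<and> {x, y} \<in> E}"

definition connected_in :: "nat set set \<Rightarrow> nat set \<Rightarrow> bool" where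
  "connected_in E S \<longleftrightarrow> S \<noteq> {} \<and> (\<forall>u\<in>S. \<forall>v\<in>S. (u, v) \<in> (adj_in E S)\<^sup>*)"

definition tree_graph :: "nat set \<Rightarrow> nat set set \<Rightarrow> bool" where
  "tree_graph T TE \<longleftrightarrow>
     finite T \<and>
     (\<forall>e\<in>TE. \<exists>u v. e = {u, v} \<and> u \<noteq> v \<and> u \<in> T \<and> v \<in> T) \<and>
     connected_in TE T \<and>
     \<not> (\<exists>cs. 3 \<le> length cs \<and> distinct cs \<and> set cs \<subseteq> T \<and>
            (\<forall>i < length cs. {cs ! i, cs ! ((i + 1) mod length cs)} \<in> TE))"

definition tree_decomposition ::
  "nat set \<Rightarrow> nat set set \<Rightarrow> nat set \<Rightarrow> nat set set \<Rightarrow> (nat \<Rightarrow> nat set) \<Rightarrow> bool" where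
  "tree_decomposition V E T TE B \<longleftrightarrow>
     tree_graph T TE \<and>
     (\<forall>t\<in>T. B t \<subseteq> V) \<and>
     (\<forall>v\<in>V. \<exists>t\<in>T. v \<in> B t) \<and>
     (\<forall>e\<in>E. \<exists>t\<in>T. e \<subseteq> B t) \<and>
     (\<forall>v\<in>V. connected_in TE {t \<in> T. v \<in> B t})"

definition decomposition_width :: "nat set \<Rightarrow> (nat \<Rightarrow> nat set) \<Rightarrow> nat" where
  "decomposition_width T B = Max ((\<lambda>t. card (B t)) ` T) - 1"

definition treewidth :: "nat set \<Rightarrow> nat set set \<Rightarrow> nat" where
  "treewidth V E = (LEAST w. \<exists>T TE B. tree_decomposition V E T TE B \<and> decomposition_width T B = w)"

text \<open>Treedepth: minimum height of a rooted forest on V whose closure contains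
every edge. A rooted forest (through its closure) is encoded by its strict
ancestor relation R: transitive, irreflexive, and the ancestors of each vertex
form a chain. Height = max number of vertices on a root-to-node path.\<close>

definition forest_order :: "nat set \<Rightarrow> (nat \<times> nat) set \<Rightarrow> bool" where
  "forest_order V R \<longleftrightarrow>
     R \<subseteq> V \<times> V \<and> trans R \<and> irrefl R \<and>
     (\<forall>v\<in>V. \<forall>x y. (x, v) \<in> R \<and> (y, v) \<in> R \<longrightarrow> x = y \<or> (x, y) \<in> R \<or> (y, x) \<in> R)"

definition treedepth :: "nat set \<Rightarrow> nat set set \<Rightarrow> nat" where
  "treedepth V E = (LEAST h. \<exists>R. forest_order V R \<and>
       (\<forall>u v. {u, v} \<in> E \<longrightarrow> u = v \<or> (u, v) \<in> R \<or> (v, u) \<in> R) \<and>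
       (\<forall>v\<in>V. card {u. (u, v) \<in> R} + 1 \<le> h))"

definition vertex_cover_number :: "nat set \<Rightarrow> nat set set \<Rightarrow> nat" where
  "vertex_cover_number V E = (LEAST k. \<exists>S. S \<subseteq> V \<and> card S = k \<and> (\<forall>e\<in>E. e \<inter> S \<noteq> {}))"

end

theory Submission
  imports Defs
begin

lemma add_rf: "\<exists>F. recfn (Suc (Suc 0)) F \<and> (\<forall>a b. F [a,b] = a + b)"
proof -
  have g1: "recfn (Suc 0) (\<lambda>xs. xs ! 0)" by (rule rf_proj) simp
  have s: "recfn (Suc 0) (\<lambda>xs. Suc (hd xs))" using rf_succ by simp
  have h1: "recfn (Suc (Suc (Suc 0))) (\<lambda>xs. Suc (hd (map (\<lambda>f. f xs) [\<lambda>xs. xs ! 0])))"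
    by (rule rf_comp[OF s]) (auto intro: rf_proj)
  have r: "recfn (Suc (Suc 0)) (\<lambda>xs. rec_nat ((\<lambda>xs. xs ! 0) (tl xs))
      (\<lambda>k r. (\<lambda>xs. Suc (hd (map (\<lambda>f. f xs) [\<lambda>xs. xs ! 0]))) (r # k # tl xs)) (hd xs))"
    by (rule rf_prim[OF g1 h1])
  have e: "rec_nat b (\<lambda>k r. Suc r) a = a + b" for a b :: nat by (induct a) auto
  show ?thesis using r e by (intro exI[of _ "(\<lambda>xs. rec_nat ((\<lambda>xs. xs ! 0) (tl xs))
      (\<lambda>k r. (\<lambda>xs. Suc (hd (map (\<lambda>f. f xs) [\<lambda>xs. xs ! 0]))) (r # k # tl xs)) (hd xs))"]) simp
qed

lemma comp4: "computable (\<lambda>n. 4 ^ n)"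
proof -
  obtain F where F: "recfn (Suc (Suc 0)) F" "\<And>a b. F [a,b] = a + b" using add_rf by blast
  have p0: "recfn (Suc (Suc 0)) (\<lambda>xs. xs ! 0)" by (rule rf_proj) simp
  have D: "recfn (Suc (Suc 0)) (\<lambda>xs. F (map (\<lambda>f. f xs) [\<lambda>xs. xs ! 0, \<lambda>xs. xs ! 0]))"
    by (rule rf_comp[OF F(1)]) (auto intro: p0)
  have Q: "recfn (Suc (Suc 0)) (\<lambda>xs. F (map (\<lambda>f. f xs) [\<lambda>xs. F (map (\<lambda>f. f xs) [\<lambda>xs. xs ! 0, \<lambda>xs. xs ! 0]),
            \<lambda>xs. F (map (\<lambda>f. f xs) [\<lambda>xs. xs ! 0, \<lambda>xs. xs ! 0])]))"
    by (rule rf_comp[OF F(1)]) (use D in auto)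
  have s: "recfn (Suc 0) (\<lambda>xs. Suc (hd xs))" using rf_succ by simp
  have z: "recfn 0 (\<lambda>xs::nat list. 0)" by (rule rf_zero)
  have G0: "recfn 0 (\<lambda>xs. Suc (hd (map (\<lambda>f. f xs) [\<lambda>xs::nat list. 0::nat])))"
    by (rule rf_comp[OF s]) (auto intro: z)
  define QQ where "QQ = (\<lambda>xs. F (map (\<lambda>f. f xs) [\<lambda>xs. F (map (\<lambda>f. f xs) [\<lambda>xs. xs ! 0, \<lambda>xs. xs ! 0]),
            \<lambda>xs. F (map (\<lambda>f. f xs) [\<lambda>xs. xs ! 0, \<lambda>xs. xs ! 0])]))"
  define GG where "GG = (\<lambda>xs. Suc (hd (map (\<lambda>f. f xs) [\<lambda>xs::nat list. 0::nat])))"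
  have R: "recfn (Suc 0) (\<lambda>xs. rec_nat (GG (tl xs)) (\<lambda>k r. QQ (r # k # tl xs)) (hd xs))"
    unfolding QQ_def GG_def by (rule rf_prim[OF G0 Q])
  have QQv: "QQ [r, k] = 4 * r" for r k unfolding QQ_def by (simp add: F(2))
  have e: "rec_nat (GG []) (\<lambda>k r. QQ [r, k]) x = 4 ^ x" for x
    by (induct x) (auto simp: QQv GG_def)
  show ?thesis unfolding computable_def using R e by (intro exI[of _ "\<lambda>xs. rec_nat (GG (tl xs)) (\<lambda>k r. QQ (r # k # tl xs)) (hd xs)"]) simp
qed
lemma mg_edge: "mixed_graph V E A \<Longrightarrow> {u,v} \<in> E \<Longrightarrow> u \<noteq> v \<and> u \<in> V \<and> v \<in> V"
  unfolding mixed_graph_def by (metis doubleton_eq_iff)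

lemma mg_arc: "mixed_graph V E A \<Longrightarrow> (u,v) \<in> A \<Longrightarrow> u \<in> V \<and> v \<in> V"
  unfolding mixed_graph_def by auto

lemma mg_trancl: "mixed_graph V E A \<Longrightarrow> (u,v) \<in> A\<^sup>+ \<Longrightarrow> u \<in> V \<and> v \<in> V"
  unfolding mixed_graph_def using trancl_subset_Sigma[of A V] by auto

lemma mg_irr: "mixed_graph V E A \<Longrightarrow> (u,u) \<notin> A\<^sup>+"
  unfolding mixed_graph_def acyclic_def by auto


lemma linext:
  assumes "finite S" "acyclic r"
  shows "\<exists>p. inj_on p S \<and> p ` S \<subseteq> {1..card S} \<and> (\<forall>x\<in>S. \<forall>y\<in>S. (x,y) \<in> r \<longrightarrow> p x < p y)"
  using assms
proof (induction "card S" arbitrary: S rule: less_induct)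
  case less
  show ?case
  proof (cases "S = {}")
    case True then show ?thesis by auto
  next
    case False
    let ?r = "r \<inter> S \<times> S"
    have fin: "finite ?r" using less.prems by auto
    have ac: "acyclic ?r" using less.prems(2) acyclic_subset by blast
    have "wf (?r\<inverse>)" using finite_acyclic_wf_converse[OF fin ac] .
    moreover obtain x0 where "x0 \<in> S" using False by blast
    ultimately obtain m where m: "m \<in> S" "\<And>y. (y, m) \<in> ?r\<inverse> \<Longrightarrow> y \<notin> S"
      by (rule wfE_min) blast
    have mx: "\<forall>y\<in>S. (m,y) \<notin> r" using m by blast
    have cs: "card (S - {m}) < card S" using m(1) less.prems(1) by (rule card_Diff1_less[rotated])
    obtain p where p: "inj_on p (S - {m})" "p ` (S - {m}) \<subseteq> {1..card (S - {m})}"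
      "\<forall>x\<in>S - {m}. \<forall>y\<in>S - {m}. (x,y) \<in> r \<longrightarrow> p x < p y"
      using less.hyps[OF cs] less.prems by (meson finite_Diff acyclic_subset)
    have cS: "card (S - {m}) + 1 = card S" using m(1) less.prems(1) cs by (simp add: card_Diff_singleton)
    define q where "q = p(m := card S)"
    have qS: "q x = p x" if "x \<in> S - {m}" for x using that by (simp add: q_def)
    have ns: "card S \<notin> p ` (S - {m})" using p(2) cS by auto
    have "inj_on q (S - {m})" using p(1) by (simp add: q_def inj_on_fun_updI ns)
    moreover have "q m \<notin> q ` (S - {m})" using ns qS by (simp add: q_def)
    ultimately have "inj_on q (insert m (S - {m}))" by (subst inj_on_insert) (simp add: Diff_idemp)
    moreover have "insert m (S - {m}) = S" using m(1) by blast
    ultimately have i: "inj_on q S" by simp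
    have "q ` S \<subseteq> {1..card S}"
    proof
      fix z assume "z \<in> q ` S"
      then obtain x where x: "x \<in> S" "z = q x" by blast
      show "z \<in> {1..card S}"
      proof (cases "x = m")
        case True then show ?thesis using x cS by (simp add: q_def)
      next
        case False then have "p x \<in> {1..card (S - {m})}" using p(2) x by blast
        then show ?thesis using x False cS by (simp add: q_def)
      qed
    qed
    moreover have "\<forall>x\<in>S. \<forall>y\<in>S. (x,y) \<in> r \<longrightarrow> q x < q y"
    proof (intro ballI impI)
      fix x y assume xy: "x \<in> S" "y \<in> S" "(x,y) \<in> r"
      have xm: "x \<noteq> m" using mx xy by blast
      show "q x < q y"
      proof (cases "y = m")
        case True
        have "p x \<in> {1..card (S - {m})}" using p(2) xy xm by blast
        then show ?thesis using True xm cS by (simp add: q_def)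
      next
        case False then show ?thesis using xy xm p(3) by (simp add: q_def)
      qed
    qed
    ultimately show ?thesis using i by blast
  qed
qed
lemma vc_color:
  assumes mg: "mixed_graph V E A" and S: "S \<subseteq> V" "\<forall>e\<in>underlying E A. e \<inter> S \<noteq> {}"
  shows "\<exists>c. proper_coloring V E A (2 * card S + 1) c"
proof -
  have finV: "finite V" using mg unfolding mixed_graph_def by auto
  have finS: "finite S" using S finV finite_subset by blast
  have acA: "acyclic (A\<^sup>+)" using mg unfolding mixed_graph_def acyclic_def by simp
  obtain p where p: "inj_on p S" "p ` S \<subseteq> {1..card S}"
      "\<forall>x\<in>S. \<forall>y\<in>S. (x,y) \<in> A\<^sup>+ \<longrightarrow> p x < p y"
    using linext[OF finS acA] by blast
  have p1: "1 \<le> p x" "p x \<le> card S" if "x \<in> S" for x using p(2) that by (auto simp: image_subset_iff)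
  define M where "M v = Max (insert 0 (p ` {s\<in>S. (s,v) \<in> A\<^sup>+}))" for v
  have finM: "finite (insert 0 (p ` {s\<in>S. (s,v) \<in> A\<^sup>+}))" for v using finS by auto
  have Mle: "M v \<le> card S" for v unfolding M_def using finM p1 by (subst Max_le_iff) auto
  have Mge: "s \<in> S \<Longrightarrow> (s,v) \<in> A\<^sup>+ \<Longrightarrow> p s \<le> M v" for s v unfolding M_def using finM by (intro Max_ge) auto
  have cov: "u \<in> S \<or> v \<in> S" if "{u,v} \<in> underlying E A" for u v
  proof -
    have "{u,v} \<inter> S \<noteq> {}" using S(2) that by blast
    then show ?thesis by blast
  qed
  have covE: "u \<in> S \<or> v \<in> S" if "{u,v} \<in> E" for u v using cov[of u v] that unfolding underlying_def by blast
  have covA: "u \<in> S \<or> v \<in> S" if "(u,v) \<in> A" for u v using cov[of u v] that unfolding underlying_def by blast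
  define c where "c v = (if v \<in> S then 2 * p v else 2 * M v + 1)" for v
  have "proper_coloring V E A (2 * card S + 1) c"
    unfolding proper_coloring_def
  proof (intro conjI allI impI ballI)
    fix v assume "v \<in> V"
    show "c v \<in> {1..2 * card S + 1}"
    proof (cases "v \<in> S")
      case True then show ?thesis using p1[OF True] by (simp add: c_def)
    next
      case False then show ?thesis using Mle[of v] by (simp add: c_def)
    qed
  next
    fix u v assume e: "{u,v} \<in> E"
    have uv: "u \<noteq> v" using mg_edge[OF mg e] by blast
    show "c u \<noteq> c v"
    proof (cases "u \<in> S"; cases "v \<in> S")
      assume "u \<in> S" "v \<in> S" then show ?thesis using uv p(1) unfolding c_def inj_on_def by auto
    next
      assume "u \<in> S" "v \<notin> S" then show ?thesis unfolding c_def by presburger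
    next
      assume "u \<notin> S" "v \<in> S" then show ?thesis unfolding c_def by presburger
    next
      assume "u \<notin> S" "v \<notin> S" then show ?thesis using covE[OF e] by blast
    qed
  next
    fix u v assume a: "(u,v) \<in> A"
    have a': "(u,v) \<in> A\<^sup>+" using a by blast
    show "c u < c v"
    proof (cases "u \<in> S"; cases "v \<in> S")
      assume "u \<in> S" "v \<in> S" then show ?thesis using p(3) a' unfolding c_def by auto
    next
      assume "u \<in> S" "v \<notin> S" then show ?thesis using Mge[OF _ a'] unfolding c_def by fastforce
    next
      assume uv: "u \<notin> S" "v \<in> S"
      have "\<forall>s\<in>{s\<in>S. (s,u) \<in> A\<^sup>+}. p s < p v"
      proof
        fix s assume "s \<in> {s\<in>S. (s,u) \<in> A\<^sup>+}"
        then have "s \<in> S" "(s,v) \<in> A\<^sup>+" using a by auto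
        then show "p s < p v" using p(3) uv by blast
      qed
      then have "M u < p v" unfolding M_def using finM p1[OF uv(2)] by (subst Max_less_iff) auto
      then show ?thesis using uv unfolding c_def by simp
    next
      assume "u \<notin> S" "v \<notin> S" then show ?thesis using covA[OF a] by blast
    qed
  qed
  then show ?thesis by blast
qed

lemma forest_wf:
  assumes "forest_order V R" "finite V"
  shows "wf R"
proof -
  have "R \<subseteq> V \<times> V" "trans R" "irrefl R" using assms(1) unfolding forest_order_def by auto
  moreover have "finite (V \<times> V)" using assms(2) by simp
  ultimately have "finite R" "acyclic R" using finite_subset
    by (auto simp: acyclic_def irrefl_def trancl_id)
  then show ?thesis by (rule finite_acyclic_wf)
qed

lemma td_color:
  "mixed_graph V E A \<Longrightarrow> forest_order V R \<Longrightarrow>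
   (\<forall>u v. {u,v} \<in> underlying E A \<longrightarrow> u = v \<or> (u,v) \<in> R \<or> (v,u) \<in> R) \<Longrightarrow>
   (\<forall>v\<in>V. card {u. (u,v) \<in> R} + 1 \<le> d) \<Longrightarrow> \<exists>c. proper_coloring V E A (4^d) c"
proof (induction d arbitrary: V E A R)
  case 0
  then have V: "V = {}" by auto
  have "proper_coloring V E A (4^0) (\<lambda>x. 1)"
    unfolding proper_coloring_def using mg_edge[OF 0(1)] mg_arc[OF 0(1)] V by auto
  then show ?case by blast
next
  case (Suc d)
  note mg = Suc.prems(1) and fo = Suc.prems(2) and cmp = Suc.prems(3) and dep = Suc.prems(4)
  have finV: "finite V" using mg unfolding mixed_graph_def by auto
  have RV: "R \<subseteq> V \<times> V" and trR: "trans R" and irR: "irrefl R"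
    and chR: "\<And>v x y. v \<in> V \<Longrightarrow> (x, v) \<in> R \<Longrightarrow> (y, v) \<in> R \<Longrightarrow> x = y \<or> (x, y) \<in> R \<or> (y, x) \<in> R"
    using fo unfolding forest_order_def by blast+
  have irR': "(x,x) \<notin> R" for x using irR by (simp add: irrefl_def)
  have wfR: "wf R" by (rule forest_wf[OF fo finV])
  define S where "S = {v\<in>V. \<forall>u. (u,v) \<notin> R}"
  have ex_root: "\<exists>r\<in>S. r = x \<or> (r,x) \<in> R" if x: "x \<in> V" for x
  proof -
    have "x \<in> {r. r = x \<or> (r,x) \<in> R}" by simp
    then obtain m where m: "m \<in> {r. r = x \<or> (r,x) \<in> R}" "\<And>y. (y,m) \<in> R \<Longrightarrow> y \<notin> {r. r = x \<or> (r,x) \<in> R}"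
      by (rule wfE_min[OF wfR]) blast+
    have "m \<in> V" using m(1) x RV by auto
    moreover have "(u,m) \<notin> R" for u
    proof
      assume um: "(u,m) \<in> R"
      then have "(u,x) \<in> R" using m(1) trR by (auto dest: transD)
      then show False using m(2)[OF um] by simp
    qed
    ultimately show ?thesis using m(1) unfolding S_def by blast
  qed
  have root_uniq: "r1 = r2" if "r1 \<in> S" "r2 \<in> S" "r1 = x \<or> (r1,x) \<in> R" "r2 = x \<or> (r2,x) \<in> R" "x \<in> V" for r1 r2 x
    using that chR[of x r1 r2] unfolding S_def by blast
  define \<rho> where "\<rho> x = (SOME r. r \<in> S \<and> (r = x \<or> (r,x) \<in> R))" for x
  have rho: "\<rho> x \<in> S \<and> (\<rho> x = x \<or> (\<rho> x, x) \<in> R)" if "x \<in> V" for x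
    unfolding \<rho>_def using someI_ex[OF ex_root[OF that, unfolded Bex_def]] .
  have rho_S: "\<rho> r = r" if "r \<in> S" for r
    using root_uniq[of "\<rho> r" r r] rho[of r] that unfolding S_def by auto
  have rho_R: "\<rho> x = \<rho> y" if "(x,y) \<in> R" for x y
  proof -
    have xy: "x \<in> V" "y \<in> V" using that RV by auto
    have "(\<rho> x, y) \<in> R" using rho[OF xy(1)] that trR by (auto dest: transD)
    then show ?thesis using root_uniq[of "\<rho> x" "\<rho> y" y] rho xy by auto
  qed
  have rho_A: "\<rho> x = \<rho> y" if "(x,y) \<in> A" for x y
  proof -
    have "{x,y} \<in> underlying E A" using that unfolding underlying_def by blast
    then show ?thesis using cmp rho_R by metis
  qed
  have rho_At: "\<rho> x = \<rho> y" if "(x,y) \<in> A\<^sup>+" for x y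
    using that by (induction rule: trancl_induct) (auto dest: rho_A)
  have S_ind: "False" if "u \<in> S" "v \<in> S" "u \<noteq> v" "{u,v} \<in> underlying E A" for u v
    using cmp that unfolding S_def by blast
  define V' where "V' = V - S"
  define E' where "E' = {e\<in>E. e \<subseteq> V'}"
  define A' where "A' = A \<inter> V' \<times> V'"
  define R' where "R' = R \<inter> V' \<times> V'"
  have mg': "mixed_graph V' E' A'"
    unfolding mixed_graph_def
  proof (intro conjI)
    show "finite V'" using finV unfolding V'_def by simp
    show "\<forall>e\<in>E'. \<exists>u v. e = {u, v} \<and> u \<noteq> v \<and> u \<in> V' \<and> v \<in> V'"
    proof
      fix e assume e: "e \<in> E'"
      then obtain u v where "e = {u,v}" "u \<noteq> v" using mg unfolding mixed_graph_def E'_def by blast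
      then show "\<exists>u v. e = {u, v} \<and> u \<noteq> v \<and> u \<in> V' \<and> v \<in> V'" using e unfolding E'_def by blast
    qed
    show "A' \<subseteq> V' \<times> V'" unfolding A'_def by blast
    show "\<forall>v. (v, v) \<notin> A'" using mg unfolding mixed_graph_def A'_def by blast
    show "\<forall>u v. (u, v) \<in> A' \<longrightarrow> {u, v} \<notin> E'" using mg unfolding mixed_graph_def A'_def E'_def by blast
    show "acyclic A'" using mg unfolding mixed_graph_def A'_def by (meson Int_lower1 acyclic_subset)
  qed
  have fo': "forest_order V' R'"
    unfolding forest_order_def
  proof (intro conjI)
    show "R' \<subseteq> V' \<times> V'" unfolding R'_def by blast
    show "trans R'" using trR unfolding R'_def trans_def by blast
    show "irrefl R'" using irR unfolding R'_def irrefl_def by blast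
    show "\<forall>v\<in>V'. \<forall>x y. (x, v) \<in> R' \<and> (y, v) \<in> R' \<longrightarrow> x = y \<or> (x, y) \<in> R' \<or> (y, x) \<in> R'"
      using chR RV unfolding R'_def by blast
  qed
  have cmp': "\<forall>u v. {u,v} \<in> underlying E' A' \<longrightarrow> u = v \<or> (u,v) \<in> R' \<or> (v,u) \<in> R'"
  proof (intro allI impI)
    fix u v assume uv: "{u,v} \<in> underlying E' A'"
    then have "{u,v} \<in> underlying E A" unfolding underlying_def E'_def A'_def by blast
    moreover have "u \<in> V' \<and> v \<in> V'" using uv unfolding underlying_def E'_def A'_def
      by (auto simp: doubleton_eq_iff)
    ultimately show "u = v \<or> (u,v) \<in> R' \<or> (v,u) \<in> R'" using cmp unfolding R'_def by blast
  qed
  have dep': "\<forall>v\<in>V'. card {u. (u,v) \<in> R'} + 1 \<le> d"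
  proof
    fix v assume v: "v \<in> V'"
    have vV: "v \<in> V" "v \<notin> S" using v unfolding V'_def by auto
    let ?X = "{u. (u,v) \<in> R}"
    have finX: "finite ?X" using RV by (intro finite_subset[OF _ finV]) auto
    have nv: "\<rho> v \<noteq> v" using rho[OF vV(1)] vV(2) by auto
    have rX: "\<rho> v \<in> ?X" using rho[OF vV(1)] nv by auto
    have "{u. (u,v) \<in> R'} \<subseteq> ?X - {\<rho> v}" using rho[OF vV(1)] unfolding R'_def V'_def by auto
    then have "card {u. (u,v) \<in> R'} \<le> card (?X - {\<rho> v})" using finX by (intro card_mono) auto
    also have "\<dots> = card ?X - 1" using rX finX by simp
    finally have "card {u. (u,v) \<in> R'} \<le> card ?X - 1" .
    moreover have "card ?X + 1 \<le> Suc d" using dep vV(1) by blast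
    moreover have "card ?X \<ge> 1" using rX finX by (metis One_nat_def Suc_leI card_gt_0_iff empty_iff)
    ultimately show "card {u. (u,v) \<in> R'} + 1 \<le> d" by linarith
  qed
  obtain c' where c': "proper_coloring V' E' A' (4^d) c'" using Suc.IH[OF mg' fo' cmp' dep'] by blast
  define k where "k = (4::nat)^d"
  have k1: "1 \<le> k" unfolding k_def by simp
  have cr: "1 \<le> c' x \<and> c' x \<le> k" if "x \<in> V'" for x using c' that unfolding proper_coloring_def k_def by auto
  have cE: "c' u \<noteq> c' v" if "{u,v} \<in> E" "u \<in> V'" "v \<in> V'" for u v
    using c' that unfolding proper_coloring_def E'_def by auto
  have cA: "c' u < c' v" if "(u,v) \<in> A" "u \<in> V'" "v \<in> V'" for u v
    using c' that unfolding proper_coloring_def A'_def by auto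
  define P where "P x = ((x, \<rho> x) \<in> A\<^sup>+)" for x
  define Q where "Q x = ((\<rho> x, x) \<in> A\<^sup>+)" for x
  have PQ: "\<not> (P x \<and> Q x)" for x using mg_irr[OF mg, of x] unfolding P_def Q_def by (meson trancl_trans)
  define c where "c x = (if x \<in> S then k + 1 else if P x then c' x else if Q x then 2*k+1 + c' x else k+1 + c' x)" for x
  have "proper_coloring V E A (4 ^ Suc d) c"
    unfolding proper_coloring_def
  proof (intro conjI allI impI ballI)
    fix v assume v: "v \<in> V"
    have "4 ^ Suc d = 4 * k" unfolding k_def by simp
    then show "c v \<in> {1..4 ^ Suc d}" using cr[of v] k1 v unfolding c_def V'_def by auto
  next
    fix u v assume e: "{u,v} \<in> E"
    have uv: "u \<noteq> v" "u \<in> V" "v \<in> V" using mg_edge[OF mg e] by auto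
    have eu: "{u,v} \<in> underlying E A" using e unfolding underlying_def by blast
    show "c u \<noteq> c v"
    proof (cases "u \<in> S"; cases "v \<in> S")
      assume "u \<in> S" "v \<in> S" then show ?thesis using S_ind uv eu by blast
    next
      assume a: "u \<in> S" "v \<notin> S" then show ?thesis using cr[of v] uv unfolding c_def V'_def by auto
    next
      assume a: "u \<notin> S" "v \<in> S" then show ?thesis using cr[of u] uv unfolding c_def V'_def by auto
    next
      assume a: "u \<notin> S" "v \<notin> S"
      then have "u \<in> V'" "v \<in> V'" using uv unfolding V'_def by auto
      then show ?thesis using cr[of u] cr[of v] cE[OF e] a unfolding c_def by auto
    qed
  next
    fix u v assume a: "(u,v) \<in> A"
    have uv: "u \<noteq> v" "u \<in> V" "v \<in> V" using mg_arc[OF mg a] mg_irr[OF mg, of u] a by auto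
    have eu: "{u,v} \<in> underlying E A" using a unfolding underlying_def by blast
    have rr: "\<rho> u = \<rho> v" using rho_A[OF a] .
    show "c u < c v"
    proof (cases "u \<in> S"; cases "v \<in> S")
      assume "u \<in> S" "v \<in> S" then show ?thesis using S_ind uv eu by blast
    next
      assume b: "u \<in> S" "v \<notin> S"
      then have "Q v" using rr rho_S a unfolding Q_def by auto
      then show ?thesis using cr[of v] uv b PQ[of v] unfolding c_def V'_def by auto
    next
      assume b: "u \<notin> S" "v \<in> S"
      then have "P u" using rr rho_S a unfolding P_def by auto
      then show ?thesis using cr[of u] uv b unfolding c_def V'_def by auto
    next
      assume b: "u \<notin> S" "v \<notin> S"
      then have V': "u \<in> V'" "v \<in> V'" using uv unfolding V'_def by auto
      have pp: "P v \<Longrightarrow> P u" using rr a unfolding P_def by auto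
      have qq: "Q u \<Longrightarrow> Q v" using rr a unfolding Q_def by auto
      show ?thesis using cr[OF V'(1)] cr[OF V'(2)] cA[OF a V'] b pp qq PQ[of u] PQ[of v]
        unfolding c_def by auto
    qed
  qed
  then show ?case by blast
qed


definition no_cyc :: "nat set \<Rightarrow> nat set set \<Rightarrow> bool" where
  "no_cyc T TE \<longleftrightarrow> \<not> (\<exists>cs. 3 \<le> length cs \<and> distinct cs \<and> set cs \<subseteq> T \<and>
            (\<forall>i < length cs. {cs ! i, cs ! ((i + 1) mod length cs)} \<in> TE))"

definition tpath :: "nat set \<Rightarrow> nat set set \<Rightarrow> nat list \<Rightarrow> bool" where
  "tpath T TE ps \<longleftrightarrow> ps \<noteq> [] \<and> distinct ps \<and> set ps \<subseteq> T \<and> (\<forall>i. Suc i < length ps \<longrightarrow> {ps ! i, ps ! Suc i} \<in> TE)"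

lemma leaf_exists:
  assumes fin: "finite T" and ne: "T \<noteq> {}" and nl: "\<forall>x. {x} \<notin> TE" and nc: "no_cyc T TE"
  shows "\<exists>t\<in>T. \<forall>y\<in>T. \<forall>z\<in>T. {t,y} \<in> TE \<longrightarrow> {t,z} \<in> TE \<longrightarrow> y = z"
proof -
  let ?L = "{length ps | ps. tpath T TE ps}"
  have bnd: "length ps \<le> card T" if "tpath T TE ps" for ps
  proof -
    have "length ps = card (set ps)" using that unfolding tpath_def by (simp add: distinct_card)
    also have "\<dots> \<le> card T" using that fin unfolding tpath_def by (intro card_mono) auto
    finally show ?thesis .
  qed
  have finL: "finite ?L" by (rule finite_subset[of _ "{..card T}"]) (auto dest: bnd)
  obtain t0 where "t0 \<in> T" using ne by blast
  then have "tpath T TE [t0]" unfolding tpath_def by simp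
  then have neL: "?L \<noteq> {}" by blast
  have "Max ?L \<in> ?L" using finL neL by (rule Max_in)
  then obtain ps where ps: "tpath T TE ps" "length ps = Max ?L" by auto
  have mx: "length qs \<le> length ps" if "tpath T TE qs" for qs
    using ps(2) Max_ge[OF finL] that by auto
  have psd: "ps \<noteq> []" "distinct ps" "set ps \<subseteq> T" "\<And>i. Suc i < length ps \<Longrightarrow> {ps ! i, ps ! Suc i} \<in> TE"
    using ps(1) unfolding tpath_def by auto
  define t where "t = ps ! 0"
  have tT: "t \<in> T" using psd unfolding t_def by (simp add: subset_iff)
  have nb: "length ps > 1 \<and> y = ps ! 1" if y: "y \<in> T" "{t,y} \<in> TE" for y
  proof (cases "y \<in> set ps")
    case False
    have "tpath T TE (y # ps)" unfolding tpath_def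
    proof (intro conjI allI impI)
      show "y # ps \<noteq> []" by simp
      show "distinct (y # ps)" using False psd by simp
      show "set (y # ps) \<subseteq> T" using psd y by simp
      fix i assume i: "Suc i < length (y # ps)"
      show "{(y # ps) ! i, (y # ps) ! Suc i} \<in> TE"
      proof (cases i)
        case 0 then show ?thesis using y(2) unfolding t_def by (simp add: insert_commute)
      next
        case (Suc j) then show ?thesis using psd(4)[of j] i by simp
      qed
    qed
    then show ?thesis using mx by fastforce
  next
    case True
    then obtain j where j: "j < length ps" "y = ps ! j" by (auto simp: in_set_conv_nth)
    have j0: "j \<noteq> 0"
    proof
      assume "j = 0"
      then have "{t} \<in> TE" using y(2) j unfolding t_def by simp
      with nl show False by blast
    qed
    show ?thesis
    proof (cases "j = 1")
      case True then show ?thesis using j by simp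
    next
      case False
      define cs where "cs = take (Suc j) ps"
      have lcs: "length cs = Suc j" using j unfolding cs_def by simp
      have "3 \<le> length cs \<and> distinct cs \<and> set cs \<subseteq> T \<and>
            (\<forall>i < length cs. {cs ! i, cs ! ((i + 1) mod length cs)} \<in> TE)"
      proof (intro conjI allI impI)
        show "3 \<le> length cs" using lcs j0 False by simp
        show "distinct cs" using psd unfolding cs_def by simp
        show "set cs \<subseteq> T" using psd unfolding cs_def by (meson set_take_subset subset_trans)
        fix i assume i: "i < length cs"
        show "{cs ! i, cs ! ((i + 1) mod length cs)} \<in> TE"
        proof (cases "i = j")
          case True
          then have "(i + 1) mod length cs = 0" using lcs by simp
          then show ?thesis using True y(2) j unfolding cs_def t_def by (simp add: insert_commute)
        next
          case False
          then have "i + 1 < length cs" using i lcs by simp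
          then show ?thesis using psd(4)[of i] lcs j unfolding cs_def by simp
        qed
      qed
      then show ?thesis using nc unfolding no_cyc_def by blast
    qed
  qed
  show ?thesis using tT nb by blast
qed

lemma conn_step:
  assumes "connected_in TE S" "t \<in> S" "s \<in> S" "s \<noteq> t"
  shows "\<exists>y\<in>S. {t,y} \<in> TE"
proof -
  have "(t,s) \<in> (adj_in TE S)\<^sup>*" using assms unfolding connected_in_def by blast
  then show ?thesis using assms(4)
    by (cases rule: converse_rtranclE) (auto simp: adj_in_def)
qed

lemma conn_remove:
  assumes c: "connected_in TE S" and t: "t \<in> S" and ne: "S - {t} \<noteq> {}"
    and lf: "\<forall>y\<in>S. \<forall>z\<in>S. {t,y} \<in> TE \<longrightarrow> {t,z} \<in> TE \<longrightarrow> y = z"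
  shows "connected_in TE (S - {t})"
  unfolding connected_in_def
proof (intro conjI ballI)
  show "S - {t} \<noteq> {}" by (rule ne)
  fix u v assume u: "u \<in> S - {t}" and v: "v \<in> S - {t}"
  define C where "C = {x. (u,x) \<in> (adj_in TE (S - {t}))\<^sup>*}"
  have Csub: "x \<in> S - {t}" if "x \<in> C" for x
  proof -
    have "(u,x) \<in> (adj_in TE (S - {t}))\<^sup>*" using that unfolding C_def by simp
    then show ?thesis using u by (induction rule: rtrancl_induct) (auto simp: adj_in_def)
  qed
  have "(u,v) \<in> (adj_in TE S)\<^sup>*" using c u v unfolding connected_in_def by blast
  then have "v \<in> C \<or> (v = t \<and> (\<forall>y\<in>S. {t,y} \<in> TE \<longrightarrow> y \<in> C))"
  proof (induction rule: rtrancl_induct)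
    case base then show ?case unfolding C_def by simp
  next
    case (step x y)
    have xy: "x \<in> S" "y \<in> S" "{x,y} \<in> TE" using step.hyps(2) unfolding adj_in_def by auto
    from step.IH show ?case
    proof
      assume xC: "x \<in> C"
      have xt: "x \<in> S - {t}" using Csub[OF xC] .
      show ?case
      proof (cases "y = t")
        case True
        have "\<forall>y'\<in>S. {t,y'} \<in> TE \<longrightarrow> y' \<in> C"
        proof (intro ballI impI)
          fix y' assume "y' \<in> S" "{t,y'} \<in> TE"
          moreover have "{t,x} \<in> TE" using xy True by (simp add: insert_commute)
          ultimately have "y' = x" using lf xy by blast
          then show "y' \<in> C" using xC by simp
        qed
        then show ?thesis using True by blast
      next
        case False
        have "(x,y) \<in> adj_in TE (S - {t})" using xy xt False unfolding adj_in_def by auto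
        then show ?thesis using xC unfolding C_def by (meson mem_Collect_eq rtrancl.rtrancl_into_rtrancl)
      qed
    next
      assume "x = t \<and> (\<forall>y\<in>S. {t,y} \<in> TE \<longrightarrow> y \<in> C)"
      then show ?case using xy by blast
    qed
  qed
  then show "(u,v) \<in> (adj_in TE (S - {t}))\<^sup>*" using v unfolding C_def by blast
qed


definition tdec :: "nat \<Rightarrow> nat set \<Rightarrow> nat set set \<Rightarrow> nat set \<Rightarrow> nat set set \<Rightarrow> (nat \<Rightarrow> nat set) \<Rightarrow> bool" where
  "tdec k V K T TE B \<longleftrightarrow> finite T \<and> connected_in TE T \<and> (\<forall>x. {x} \<notin> TE) \<and> no_cyc T TE \<and>
     (\<forall>t\<in>T. B t \<subseteq> V \<and> card (B t) \<le> k) \<and> (\<forall>v\<in>V. \<exists>t\<in>T. v \<in> B t) \<and>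
     (\<forall>e\<in>K. \<exists>t\<in>T. e \<subseteq> B t) \<and> (\<forall>v\<in>V. connected_in TE {t\<in>T. v \<in> B t})"

lemma low_deg:
  assumes "tdec k V K T TE B" "finite V" "V \<noteq> {}" "\<forall>u w. {u,w} \<in> K \<longrightarrow> u \<in> V \<and> w \<in> V"
  shows "\<exists>v\<in>V. card {u\<in>V. u \<noteq> v \<and> {u,v} \<in> K} < k"
  using assms
proof (induction "card T" arbitrary: T rule: less_induct)
  case less
  note td = less.prems(1)[unfolded tdec_def]
  have finT: "finite T" and cT: "connected_in TE T" and nl: "\<forall>x. {x} \<notin> TE" and nc: "no_cyc T TE"
    and bg: "\<And>t. t \<in> T \<Longrightarrow> B t \<subseteq> V \<and> card (B t) \<le> k"
    and cov: "\<And>v. v \<in> V \<Longrightarrow> \<exists>t\<in>T. v \<in> B t"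
    and ed: "\<And>e. e \<in> K \<Longrightarrow> \<exists>t\<in>T. e \<subseteq> B t"
    and sc: "\<And>v. v \<in> V \<Longrightarrow> connected_in TE {t\<in>T. v \<in> B t}"
    using td by blast+
  have neT: "T \<noteq> {}" using cT unfolding connected_in_def by blast
  obtain t where t: "t \<in> T" and lf: "\<forall>y\<in>T. \<forall>z\<in>T. {t,y} \<in> TE \<longrightarrow> {t,z} \<in> TE \<longrightarrow> y = z"
    using leaf_exists[OF finT neT nl nc] by blast
  show ?case
  proof (cases "\<exists>v\<in>B t. \<forall>s\<in>T. v \<in> B s \<longrightarrow> s = t")
    case True
    then obtain v where v: "v \<in> B t" "\<forall>s\<in>T. v \<in> B s \<longrightarrow> s = t" by blast
    have vV: "v \<in> V" using bg[OF t] v by blast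
    have finB: "finite (B t)" using bg[OF t] less.prems(2) finite_subset by blast
    have "{u\<in>V. u \<noteq> v \<and> {u,v} \<in> K} \<subseteq> B t - {v}"
    proof
      fix u assume u: "u \<in> {u\<in>V. u \<noteq> v \<and> {u,v} \<in> K}"
      then obtain s where s: "s \<in> T" "{u,v} \<subseteq> B s" using ed by blast
      then have "s = t" using v by blast
      then show "u \<in> B t - {v}" using s u by blast
    qed
    then have "card {u\<in>V. u \<noteq> v \<and> {u,v} \<in> K} \<le> card (B t - {v})" using finB by (intro card_mono) auto
    also have "\<dots> = card (B t) - 1" using v(1) finB by simp
    also have "\<dots> < k" using bg[OF t] v(1) finB by (metis card_gt_0_iff diff_less empty_iff less_le_trans zero_less_one)
    finally show ?thesis using vV by blast
  next
    case False
    then have np: "\<And>v. v \<in> B t \<Longrightarrow> \<exists>s\<in>T. v \<in> B s \<and> s \<noteq> t" by blast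
    obtain v0 where v0: "v0 \<in> V" using less.prems(3) by blast
    obtain s0 where s0: "s0 \<in> T" "v0 \<in> B s0" using cov[OF v0] by blast
    have "\<exists>s\<in>T. s \<noteq> t"
    proof (cases "s0 = t")
      case True then show ?thesis using np s0 by blast
    next
      case False then show ?thesis using s0 by blast
    qed
    then obtain s1 where s1: "s1 \<in> T" "s1 \<noteq> t" by blast
    obtain t' where t': "t' \<in> T" "{t,t'} \<in> TE" using conn_step[OF cT t s1] by blast
    have tt': "t' \<noteq> t" using t' nl by auto
    have sub: "v \<in> B t'" if v: "v \<in> B t" for v
    proof -
      obtain s where s: "s \<in> T" "v \<in> B s" "s \<noteq> t" using np[OF v] by blast
      have vV: "v \<in> V" using bg[OF t] v by blast
      obtain y where y: "y \<in> {t\<in>T. v \<in> B t}" "{t,y} \<in> TE"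
        using conn_step[OF sc[OF vV], of t s] s t v by blast
      then have "y = t'" using lf t' by blast
      then show ?thesis using y by blast
    qed
    define T' where "T' = T - {t}"
    have lf': "\<forall>y\<in>S. \<forall>z\<in>S. {t,y} \<in> TE \<longrightarrow> {t,z} \<in> TE \<longrightarrow> y = z" if "S \<subseteq> T" for S
      using lf that by blast
    have "tdec k V K T' TE B"
      unfolding tdec_def
    proof (intro conjI ballI)
      show "finite T'" using finT unfolding T'_def by simp
      show "connected_in TE T'" unfolding T'_def
        using conn_remove[OF cT t _ lf] t' tt' by blast
      show "\<forall>x. {x} \<notin> TE" by (rule nl)
      show "no_cyc T' TE" using nc unfolding no_cyc_def T'_def by blast
      fix s assume "s \<in> T'" then show "B s \<subseteq> V" "card (B s) \<le> k" using bg unfolding T'_def by auto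
    next
      fix v assume v: "v \<in> V"
      obtain s where s: "s \<in> T" "v \<in> B s" using cov[OF v] by blast
      show "\<exists>s\<in>T'. v \<in> B s"
      proof (cases "s = t")
        case True then show ?thesis using sub s t' tt' unfolding T'_def by blast
      next
        case False then show ?thesis using s unfolding T'_def by blast
      qed
    next
      fix e assume e: "e \<in> K"
      obtain s where s: "s \<in> T" "e \<subseteq> B s" using ed[OF e] by blast
      show "\<exists>s\<in>T'. e \<subseteq> B s"
      proof (cases "s = t")
        case True then show ?thesis using sub s t' tt' unfolding T'_def by blast
      next
        case False then show ?thesis using s unfolding T'_def by blast
      qed
    next
      fix v assume v: "v \<in> V"
      show "connected_in TE {s\<in>T'. v \<in> B s}"
      proof (cases "v \<in> B t")
        case False
        then have "{s\<in>T'. v \<in> B s} = {s\<in>T. v \<in> B s}" unfolding T'_def by blast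
        then show ?thesis using sc[OF v] by simp
      next
        case True
        have eq: "{s\<in>T'. v \<in> B s} = {s\<in>T. v \<in> B s} - {t}" unfolding T'_def by blast
        have "t' \<in> {s\<in>T. v \<in> B s} - {t}" using sub[OF True] t' tt' by blast
        then have "{s\<in>T. v \<in> B s} - {t} \<noteq> {}" by blast
        moreover have "t \<in> {s\<in>T. v \<in> B s}" using True t by blast
        ultimately show ?thesis unfolding eq
          using conn_remove[OF sc[OF v]] lf'[of "{s\<in>T. v \<in> B s}"] by blast
      qed
    qed
    moreover have "card T' < card T" unfolding T'_def using finT t by (rule card_Diff1_less)
    ultimately show ?thesis using less.hyps less.prems(2-4) by blast
  qed
qed

lemma tw_color_und:
  assumes "tdec k V K T TE B" "finite V" "\<forall>u w. {u,w} \<in> K \<longrightarrow> u \<in> V \<and> w \<in> V"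
  shows "\<exists>col. (\<forall>v\<in>V. col v \<in> {1..k}) \<and> (\<forall>u w. {u,w} \<in> K \<longrightarrow> u \<noteq> w \<longrightarrow> col u \<noteq> col w)"
  using assms
proof (induction "card V" arbitrary: V K B rule: less_induct)
  case less
  show ?case
  proof (cases "V = {}")
    case True then show ?thesis using less.prems(3) by (intro exI[of _ "\<lambda>_. 1"]) auto
  next
    case False
    obtain v where v: "v \<in> V" and dg: "card {u\<in>V. u \<noteq> v \<and> {u,v} \<in> K} < k"
      using low_deg[OF less.prems(1,2) False less.prems(3)] by blast
    define V' where "V' = V - {v}"
    define K' where "K' = {e\<in>K. e \<subseteq> V'}"
    define B' where "B' t = B t \<inter> V'" for t
    note td = less.prems(1)[unfolded tdec_def]
    have finT: "finite T" and cT: "connected_in TE T" and nl: "\<forall>x. {x} \<notin> TE" and nc: "no_cyc T TE"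
      and bg: "\<And>t. t \<in> T \<Longrightarrow> B t \<subseteq> V \<and> card (B t) \<le> k"
      and cov: "\<And>v. v \<in> V \<Longrightarrow> \<exists>t\<in>T. v \<in> B t"
      and ed: "\<And>e. e \<in> K \<Longrightarrow> \<exists>t\<in>T. e \<subseteq> B t"
      and sc: "\<And>v. v \<in> V \<Longrightarrow> connected_in TE {t\<in>T. v \<in> B t}"
      using td by blast+
    have "tdec k V' K' T TE B'"
      unfolding tdec_def
    proof (intro conjI ballI)
      show "finite T" "connected_in TE T" "\<forall>x. {x} \<notin> TE" "no_cyc T TE" using finT cT nl nc by simp_all
      fix t assume t: "t \<in> T"
      show "B' t \<subseteq> V'" unfolding B'_def by blast
      have "finite (B t)" using bg[OF t] less.prems(2) finite_subset by blast
      then have "card (B' t) \<le> card (B t)" unfolding B'_def by (intro card_mono) auto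
      then show "card (B' t) \<le> k" using bg[OF t] by linarith
    next
      fix u assume "u \<in> V'" then show "\<exists>t\<in>T. u \<in> B' t" using cov unfolding B'_def V'_def by blast
    next
      fix e assume "e \<in> K'" then show "\<exists>t\<in>T. e \<subseteq> B' t" using ed unfolding B'_def K'_def by blast
    next
      fix u assume u: "u \<in> V'"
      have "{t\<in>T. u \<in> B' t} = {t\<in>T. u \<in> B t}" using u unfolding B'_def by blast
      then show "connected_in TE {t\<in>T. u \<in> B' t}" using sc u unfolding V'_def by auto
    qed
    moreover have "card V' < card V" unfolding V'_def using less.prems(2) v by (rule card_Diff1_less)
    moreover have "finite V'" using less.prems(2) unfolding V'_def by simp
    moreover have "\<forall>u w. {u,w} \<in> K' \<longrightarrow> u \<in> V' \<and> w \<in> V'" unfolding K'_def by blast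
    ultimately obtain col' where col': "\<forall>x\<in>V'. col' x \<in> {1..k}"
      "\<forall>u w. {u,w} \<in> K' \<longrightarrow> u \<noteq> w \<longrightarrow> col' u \<noteq> col' w"
      using less.hyps by blast
    define N where "N = {u\<in>V. u \<noteq> v \<and> {u,v} \<in> K}"
    have finN: "finite N" using less.prems(2) unfolding N_def by simp
    have "card (col' ` N) < card {1..k}" using card_image_le[OF finN, of col'] dg unfolding N_def by simp
    then have "\<not> {1..k} \<subseteq> col' ` N" using finN by (meson card_mono finite_imageI not_le)
    then obtain a where a: "a \<in> {1..k}" "a \<notin> col' ` N" by blast
    define col where "col = col'(v := a)"
    have "\<forall>x\<in>V. col x \<in> {1..k}" using col'(1) a unfolding col_def V'_def by auto
    moreover have "\<forall>x y. {x,y} \<in> K \<longrightarrow> x \<noteq> y \<longrightarrow> col x \<noteq> col y"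
    proof (intro allI impI)
      fix x y assume xy: "{x,y} \<in> K" "x \<noteq> y"
      have xyV: "x \<in> V" "y \<in> V" using less.prems(3) xy by blast+
      show "col x \<noteq> col y"
      proof (cases "x = v")
        case True
        then have "y \<in> N" using xy xyV unfolding N_def by (auto simp: insert_commute)
        then show ?thesis using a True xy unfolding col_def by auto
      next
        case xv: False
        show ?thesis
        proof (cases "y = v")
          case True
          then have "x \<in> N" using xy xyV unfolding N_def by auto
          then show ?thesis using a True xy unfolding col_def by auto
        next
          case False
          then have "{x,y} \<in> K'" using xy xyV xv unfolding K'_def V'_def by auto
          then show ?thesis using col'(2) xy xv False unfolding col_def by auto
        qed
      qed
    qed
    ultimately show ?thesis by blast
  qed
qed

lemma arith_lvl:
  fixes a b x y k :: nat
  assumes "1 \<le> a" "a < b" "x \<le> k" "1 \<le> y"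
  shows "(a - 1) * k + x < (b - 1) * k + y"
proof -
  have "(a - 1) * k + x \<le> (a - 1) * k + k" using assms by simp
  also have "\<dots> = a * k" using assms(1) by (cases a) auto
  also have "\<dots> \<le> (b - 1) * k" using assms(2) by (intro mult_le_mono1) linarith
  finally show ?thesis using assms(4) by linarith
qed

lemma tw_mixed:
  assumes mg: "mixed_graph V E A" and colr: "\<forall>v\<in>V. col v \<in> {1..k}"
    and colp: "\<forall>u w. {u,w} \<in> underlying (closure_edges E A) (closure_arcs A) \<longrightarrow> u \<noteq> w \<longrightarrow> col u \<noteq> col w"
  shows "\<exists>c. proper_coloring V E A (k * k) c"
proof -
  have finV: "finite V" using mg unfolding mixed_graph_def by auto
  define ch where "ch C v \<longleftrightarrow> C \<subseteq> V \<and> v \<in> C \<and> (\<forall>x\<in>C. (x,v) \<in> A\<^sup>*) \<and>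
      (\<forall>x\<in>C. \<forall>y\<in>C. x = y \<or> (x,y) \<in> A\<^sup>+ \<or> (y,x) \<in> A\<^sup>+)" for C v
  have cmpcol: "col x \<noteq> col y" if "(x,y) \<in> A\<^sup>+" for x y
  proof -
    have "x \<noteq> y" using mg_irr[OF mg] that by blast
    moreover have "{x,y} \<in> underlying (closure_edges E A) (closure_arcs A)"
      using that unfolding underlying_def closure_arcs_def by blast
    ultimately show ?thesis using colp by blast
  qed
  have chk: "card C \<le> k" if "ch C v" for C v
  proof -
    have "inj_on col C"
    proof (rule inj_onI)
      fix x y assume "x \<in> C" "y \<in> C" "col x = col y"
      then show "x = y" using that cmpcol unfolding ch_def by metis
    qed
    moreover have "col ` C \<subseteq> {1..k}" using that colr unfolding ch_def by blast
    ultimately have "card C \<le> card {1..k}" by (intro card_inj_on_le) auto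
    then show ?thesis by simp
  qed
  define h where "h v = Max {card C | C. ch C v}" for v
  have finH: "finite {card C | C. ch C v}" for v
    by (rule finite_subset[of _ "{..k}"]) (auto dest: chk)
  have chv: "ch {v} v" if "v \<in> V" for v using that unfolding ch_def by auto
  have h1: "1 \<le> h v \<and> h v \<le> k" if v: "v \<in> V" for v
  proof -
    have ne: "{card C | C. ch C v} \<noteq> {}" using chv[OF v] by blast
    have "card {v} \<in> {card C | C. ch C v}" using chv[OF v] by blast
    then have "card {v} \<le> h v" unfolding h_def by (rule Max_ge[OF finH])
    moreover have "h v \<in> {card C | C. ch C v}" unfolding h_def using finH ne by (rule Max_in)
    ultimately show ?thesis using chk by auto
  qed
  have hm: "h u < h v" if uv: "(u,v) \<in> A\<^sup>+" for u v
  proof -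
    have uV: "u \<in> V" and vV: "v \<in> V" using mg_trancl[OF mg uv] by auto
    have ne: "{card C | C. ch C u} \<noteq> {}" using chv[OF uV] by blast
    have "h u \<in> {card C | C. ch C u}" unfolding h_def using finH ne by (rule Max_in)
    then obtain C where C: "ch C u" "card C = h u" by auto
    have vC: "v \<notin> C"
    proof
      assume "v \<in> C"
      then have "(v,u) \<in> A\<^sup>*" using C unfolding ch_def by blast
      then have "(v,v) \<in> A\<^sup>+" using uv by simp
      then show False using mg_irr[OF mg] by blast
    qed
    have toV: "(x,v) \<in> A\<^sup>+" if "x \<in> C" for x
    proof -
      have "(x,u) \<in> A\<^sup>*" using C that unfolding ch_def by blast
      then show ?thesis using uv by simp
    qed
    have "ch (insert v C) v" unfolding ch_def
    proof (intro conjI ballI)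
      show "insert v C \<subseteq> V" using C vV unfolding ch_def by blast
      show "v \<in> insert v C" by simp
      fix x assume x: "x \<in> insert v C"
      show "(x,v) \<in> A\<^sup>*" using x toV by (auto intro: trancl_into_rtrancl)
      fix y assume y: "y \<in> insert v C"
      show "x = y \<or> (x,y) \<in> A\<^sup>+ \<or> (y,x) \<in> A\<^sup>+" using x y toV C unfolding ch_def by auto
    qed
    then have "card (insert v C) \<in> {card C | C. ch C v}" by blast
    then have "card (insert v C) \<le> h v" unfolding h_def by (rule Max_ge[OF finH])
    moreover have "finite C" using C finV unfolding ch_def by (meson finite_subset)
    ultimately show ?thesis using C vC by simp
  qed
  define c where "c v = (h v - 1) * k + col v" for v
  have dif: "c u \<noteq> c v" if "u \<in> V" "v \<in> V" "h u \<noteq> h v" for u v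
  proof (cases "h u < h v")
    case True then show ?thesis using arith_lvl[of "h u" "h v" "col u" k "col v"] h1 colr that unfolding c_def by force
  next
    case False then have "h v < h u" using that by simp
    then show ?thesis using arith_lvl[of "h v" "h u" "col v" k "col u"] h1 colr that unfolding c_def by force
  qed
  have "proper_coloring V E A (k * k) c"
    unfolding proper_coloring_def
  proof (intro conjI allI impI ballI)
    fix v assume v: "v \<in> V"
    have "c v \<le> (k - 1) * k + k" using h1[OF v] colr v unfolding c_def
      by (intro add_le_mono mult_le_mono1) auto
    also have "\<dots> = k * k" using h1[OF v] by (cases k) auto
    finally show "c v \<in> {1..k * k}" using colr v unfolding c_def by auto
  next
    fix u v assume e: "{u,v} \<in> E"
    have uv: "u \<noteq> v" "u \<in> V" "v \<in> V" using mg_edge[OF mg e] by auto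
    show "c u \<noteq> c v"
    proof (cases "h u = h v")
      case False then show ?thesis using dif uv by blast
    next
      case True
      have "{u,v} \<in> closure_edges E A"
        unfolding closure_edges_def
      proof (intro CollectI conjI notI)
        show "{u,v} \<in> E" by (rule e)
        assume "\<exists>a b. {u,v} = {a,b} \<and> (a,b) \<in> A\<^sup>+"
        then have "(u,v) \<in> A\<^sup>+ \<or> (v,u) \<in> A\<^sup>+" by (auto simp: doubleton_eq_iff)
        then show False using hm True by fastforce
      qed
      then have "{u,v} \<in> underlying (closure_edges E A) (closure_arcs A)" unfolding underlying_def by blast
      then have "col u \<noteq> col v" using colp uv by blast
      then show ?thesis using True unfolding c_def by simp
    qed
  next
    fix u v assume a: "(u,v) \<in> A"
    have uv: "u \<in> V" "v \<in> V" using mg_arc[OF mg a] by auto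
    have "h u < h v" using hm a by blast
    then show "c u < c v" using arith_lvl[of "h u" "h v" "col u" k "col v"] h1 colr uv unfolding c_def by force
  qed
  then show ?thesis by blast
qed


lemma sq_le_pow4: "((n::nat) + 1) * (n + 1) \<le> 4 ^ n"
proof (induction n)
  case 0 then show ?case by simp
next
  case (Suc n)
  have "(Suc n + 1) * (Suc n + 1) \<le> (2 * (n + 1)) * (2 * (n + 1))" by (intro mult_le_mono) auto
  also have "\<dots> = 4 * ((n + 1) * (n + 1))" by simp
  also have "\<dots> \<le> 4 * 4 ^ n" using Suc.IH by simp
  finally show ?case by simp
qed

lemma und_V:
  assumes mg: "mixed_graph V E A" and e: "{u,w} \<in> underlying E A"
  shows "u \<in> V \<and> w \<in> V"
proof -
  from e consider "{u,w} \<in> E" | a b where "{u,w} = {a,b}" "(a,b) \<in> A" unfolding underlying_def by blast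
  then show ?thesis
  proof cases
    case 1 then show ?thesis using mg_edge[OF mg] by blast
  next
    case 2 then show ?thesis using mg_arc[OF mg 2(2)] by (auto simp: doubleton_eq_iff)
  qed
qed

lemma tw_part:
  assumes mg: "mixed_graph V E A"
  shows "chromatic_number V E A \<le> 4 ^ treewidth V (underlying (closure_edges E A) (closure_arcs A))"
proof -
  define K where "K = underlying (closure_edges E A) (closure_arcs A)"
  have finV: "finite V" using mg unfolding mixed_graph_def by auto
  have Kv: "\<forall>u w. {u,w} \<in> K \<longrightarrow> u \<in> V \<and> w \<in> V"
  proof (intro allI impI)
    fix u w assume e: "{u,w} \<in> K"
    from e consider "{u,w} \<in> E" | a b where "{u,w} = {a,b}" "(a,b) \<in> A\<^sup>+"
      unfolding K_def underlying_def closure_edges_def closure_arcs_def by blast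
    then show "u \<in> V \<and> w \<in> V"
    proof cases
      case 1 then show ?thesis using mg_edge[OF mg] by blast
    next
      case 2 then show ?thesis using mg_trancl[OF mg 2(2)] by (auto simp: doubleton_eq_iff)
    qed
  qed
  have Ke: "\<forall>e\<in>K. \<exists>u w. e = {u,w} \<and> u \<in> V \<and> w \<in> V"
  proof
    fix e assume e: "e \<in> K"
    have "\<exists>u w. e = {u,w}"
    proof (cases "e \<in> E")
      case True then show ?thesis using mg unfolding mixed_graph_def by blast
    next
      case False then show ?thesis using e unfolding K_def underlying_def closure_edges_def by blast
    qed
    then show "\<exists>u w. e = {u,w} \<and> u \<in> V \<and> w \<in> V" using Kv e by blast
  qed
  have tg0: "tree_graph {0} {}"
    unfolding tree_graph_def connected_in_def
  proof (intro conjI notI)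
    assume "\<exists>cs. 3 \<le> length cs \<and> distinct cs \<and> set cs \<subseteq> {0} \<and>
            (\<forall>i < length cs. {cs ! i, cs ! ((i + 1) mod length cs)} \<in> {})"
    then show False
      apply (elim exE conjE)
      apply (drule spec[of _ 0])
      apply simp
      done
  qed auto
  have "tree_decomposition V K {0} {} (\<lambda>_. V)"
    unfolding tree_decomposition_def
  proof (intro conjI)
    show "tree_graph {0} {}" by (rule tg0)
    show "\<forall>t\<in>{0::nat}. V \<subseteq> V" by simp
    show "\<forall>v\<in>V. \<exists>t\<in>{0::nat}. v \<in> V" by simp
    show "\<forall>e\<in>K. \<exists>t\<in>{0::nat}. e \<subseteq> V" using Ke by fast
    show "\<forall>v\<in>V. connected_in {} {t \<in> {0::nat}. v \<in> V}" unfolding connected_in_def by simp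
  qed
  then have "\<exists>w T TE B. tree_decomposition V K T TE B \<and> decomposition_width T B = w"
    apply -
    apply (rule exI)+
    apply (rule conjI)
     apply assumption
    apply (rule refl)
    done
  then have "\<exists>T TE B. tree_decomposition V K T TE B \<and> decomposition_width T B = treewidth V K"
    unfolding treewidth_def by (rule LeastI_ex)
  then obtain T TE B where td: "tree_decomposition V K T TE B" and wd: "decomposition_width T B = treewidth V K"
    by blast
  define w where "w = treewidth V K"
  have tg: "tree_graph T TE" using td unfolding tree_decomposition_def by blast
  have finT: "finite T" using tg unfolding tree_graph_def by blast
  have "tdec (w + 1) V K T TE B"
    unfolding tdec_def
  proof (intro conjI ballI allI)
    show "finite T" by (rule finT)
    show "connected_in TE T" using tg unfolding tree_graph_def by blast
    show "no_cyc T TE" using tg unfolding tree_graph_def no_cyc_def by blast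
    fix x
    show "{x} \<notin> TE"
    proof
      assume "{x} \<in> TE"
      then obtain u v where uv: "{x} = {u,v}" "u \<noteq> v" using tg unfolding tree_graph_def by blast
      have "u \<in> {x}" "v \<in> {x}" using uv(1) by blast+
      then show False using uv(2) by blast
    qed
  next
    fix t assume t: "t \<in> T"
    show "B t \<subseteq> V" using td t unfolding tree_decomposition_def by blast
    have "card (B t) \<le> Max ((\<lambda>t. card (B t)) ` T)" using finT t by (intro Max_ge) auto
    then show "card (B t) \<le> w + 1" using wd unfolding w_def decomposition_width_def by linarith
  next
    fix v assume "v \<in> V" then show "\<exists>t\<in>T. v \<in> B t" using td unfolding tree_decomposition_def by blast
  next
    fix e assume "e \<in> K" then show "\<exists>t\<in>T. e \<subseteq> B t" using td unfolding tree_decomposition_def by blast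
  next
    fix v assume "v \<in> V" then show "connected_in TE {t\<in>T. v \<in> B t}" using td unfolding tree_decomposition_def by blast
  qed
  then obtain col where col: "\<forall>v\<in>V. col v \<in> {1..w+1}" "\<forall>u x. {u,x} \<in> K \<longrightarrow> u \<noteq> x \<longrightarrow> col u \<noteq> col x"
    using tw_color_und[OF _ finV Kv] by blast
  obtain c where "proper_coloring V E A ((w+1) * (w+1)) c"
    using tw_mixed[OF mg col(1)] col(2) unfolding K_def by blast
  then have "chromatic_number V E A \<le> (w+1) * (w+1)" unfolding chromatic_number_def by (blast intro: Least_le)
  also have "\<dots> \<le> 4 ^ w" by (rule sq_le_pow4)
  finally show ?thesis unfolding w_def K_def .
qed

lemma td_part:
  assumes mg: "mixed_graph V E A"
  shows "chromatic_number V E A \<le> 4 ^ treedepth V (underlying E A)"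
proof -
  have finV: "finite V" using mg unfolding mixed_graph_def by auto
  define R0 where "R0 = {(u,v). u \<in> V \<and> v \<in> V \<and> u < v}"
  have fo: "forest_order V R0" unfolding forest_order_def R0_def trans_def irrefl_def by auto
  have cm: "\<forall>u v. {u,v} \<in> underlying E A \<longrightarrow> u = v \<or> (u,v) \<in> R0 \<or> (v,u) \<in> R0"
    using und_V[OF mg] unfolding R0_def by auto
  have dp: "\<forall>v\<in>V. card {u. (u,v) \<in> R0} + 1 \<le> card V"
  proof
    fix v assume v: "v \<in> V"
    have "{u. (u,v) \<in> R0} \<subseteq> V - {v}" unfolding R0_def by auto
    then have "card {u. (u,v) \<in> R0} \<le> card (V - {v})" using finV by (intro card_mono) auto
    also have "\<dots> = card V - 1" using v finV by simp
    finally have "card {u. (u,v) \<in> R0} \<le> card V - 1" .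
    moreover have "card V \<ge> 1" using v finV by (metis One_nat_def Suc_leI card_gt_0_iff empty_iff)
    ultimately show "card {u. (u,v) \<in> R0} + 1 \<le> card V" by linarith
  qed
  have "\<exists>h R. forest_order V R \<and> (\<forall>u v. {u,v} \<in> underlying E A \<longrightarrow> u = v \<or> (u,v) \<in> R \<or> (v,u) \<in> R) \<and>
       (\<forall>v\<in>V. card {u. (u,v) \<in> R} + 1 \<le> h)" using fo cm dp by blast
  then have "\<exists>R. forest_order V R \<and> (\<forall>u v. {u,v} \<in> underlying E A \<longrightarrow> u = v \<or> (u,v) \<in> R \<or> (v,u) \<in> R) \<and>
       (\<forall>v\<in>V. card {u. (u,v) \<in> R} + 1 \<le> treedepth V (underlying E A))"
    unfolding treedepth_def by (rule LeastI_ex)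
  then obtain R where "forest_order V R" "\<forall>u v. {u,v} \<in> underlying E A \<longrightarrow> u = v \<or> (u,v) \<in> R \<or> (v,u) \<in> R"
    "\<forall>v\<in>V. card {u. (u,v) \<in> R} + 1 \<le> treedepth V (underlying E A)" by blast
  then obtain c where "proper_coloring V E A (4 ^ treedepth V (underlying E A)) c"
    using td_color[OF mg] by blast
  then show ?thesis unfolding chromatic_number_def by (blast intro: Least_le)
qed

lemma vc_part:
  assumes mg: "mixed_graph V E A"
  shows "chromatic_number V E A \<le> 2 * vertex_cover_number V (underlying E A) + 1"
proof -
  have "\<forall>e\<in>underlying E A. e \<inter> V \<noteq> {}"
  proof
    fix e assume e: "e \<in> underlying E A"
    have "\<exists>u w. e = {u,w}"
    proof (cases "e \<in> E")
      case True then show ?thesis using mg unfolding mixed_graph_def by blast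
    next
      case False then show ?thesis using e unfolding underlying_def by blast
    qed
    then obtain u w where "e = {u,w}" by blast
    then show "e \<inter> V \<noteq> {}" using und_V[OF mg] e by blast
  qed
  then have "\<exists>k S. S \<subseteq> V \<and> card S = k \<and> (\<forall>e\<in>underlying E A. e \<inter> S \<noteq> {})" by blast
  then have "\<exists>S. S \<subseteq> V \<and> card S = vertex_cover_number V (underlying E A) \<and> (\<forall>e\<in>underlying E A. e \<inter> S \<noteq> {})"
    unfolding vertex_cover_number_def by (rule LeastI_ex)
  then obtain S where S: "S \<subseteq> V" "card S = vertex_cover_number V (underlying E A)" "\<forall>e\<in>underlying E A. e \<inter> S \<noteq> {}"
    by blast
  obtain c where "proper_coloring V E A (2 * card S + 1) c" using vc_color[OF mg S(1) S(3)] by blast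
  then show ?thesis unfolding chromatic_number_def S(2)[symmetric] by (blast intro: Least_le)
qed

theorem mainTheorem10:
  shows "(\<exists>f g. computable f \<and> computable g \<and>
            (\<forall>V E A. mixed_graph V E A \<longrightarrow>
               chromatic_number V E A \<le> f (treewidth V (underlying (closure_edges E A) (closure_arcs A)))) \<and>
            (\<forall>V E A. mixed_graph V E A \<longrightarrow>
               chromatic_number V E A \<le> g (treedepth V (underlying E A)))) \<and>
         (\<forall>V E A. mixed_graph V E A \<longrightarrow>
               chromatic_number V E A \<le> 2 * vertex_cover_number V (underlying E A) + 1)"
proof (intro conjI)
  show "\<exists>f g. computable f \<and> computable g \<and>
            (\<forall>V E A. mixed_graph V E A \<longrightarrow>
               chromatic_number V E A \<le> f (treewidth V (underlying (closure_edges E A) (closure_arcs A)))) \<and>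
            (\<forall>V E A. mixed_graph V E A \<longrightarrow>
               chromatic_number V E A \<le> g (treedepth V (underlying E A)))"
    by (rule exI[of _ "\<lambda>n. 4 ^ n"], rule exI[of _ "\<lambda>n. 4 ^ n"]) (use comp4 tw_part td_part in auto)
  show "\<forall>V E A. mixed_graph V E A \<longrightarrow>
               chromatic_number V E A \<le> 2 * vertex_cover_number V (underlying E A) + 1"
    using vc_part by blast
qed

end
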